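(* Let $S$ be a numerical semigroup. The following conditions are equivalent. (1) $S$ is a MANS-semigroup with $\mathrm{e}(S)=3$. (2) $S=\langle m,\ am+1,\ bm+t\rangle$, where $m,a,b,t\in\mathbb{N}$, $m\geq 3$, $a\geq 1$, $t\in\{2,\ldots,m-1\}$, and $(t-1)(am+1)<bm+t<t(am+1)$.
   Context: $\mathbb{N}=\{0,1,2,\ldots\}$. A numerical semigroup is a subset $S\subseteq\mathbb{N}$ closed under addition, containing $0$, with $\mathbb{N}\setminus S$ finite. For $A\subseteq\mathbb{N}$ nonempty, $\langle A\rangle$ is the submonoid of $(\mathbb{N},+)$ generated by $A$. Every numerical semigroup $S$ has a unique minimal system of generators $\mathrm{msg}(S)$ (finite), and $\mathrm{e}(S)=|\mathrm{msg}(S)|$ is its embedding dimension. The multiplicity $\mathrm{m}(S)$ is the least element of $S\setminus\{0\}$. For $n\in S\setminus\{0\}$, the Apéry set is $\mathrm{Ap}(S,n)=\{s\in S: s-n\notin S\}=\{w(0)=0,w(1),\ldots,w(n-1)\}$, where $w(i)$ is the least element of $S$ congruent to $i$ modulo $n$. $S$ is a MANS-semigroup (numerical semigroup with monotone Apéry set) if $w(1)<w(2)<\cdots<w(\mathrm{m}(S)-1)$, where $w(i)$ is the least element of $S$ congruent to $i$ modulo $\mathrm{m}(S)$. *)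

theory Defs
  imports Main
begin

definition numerical_semigroup :: "nat set \<Rightarrow> bool" where
  "numerical_semigroup S \<longleftrightarrow> 0 \<in> S \<and> (\<forall>x\<in>S. \<forall>y\<in>S. x + y \<in> S) \<and> finite (UNIV - S)"

inductive_set gen :: "nat set \<Rightarrow> nat set" for A :: "nat set" where
  gen_zero: "0 \<in> gen A"
| gen_add: "a \<in> A \<Longrightarrow> x \<in> gen A \<Longrightarrow> a + x \<in> gen A"

definition msg :: "nat set \<Rightarrow> nat set" where
  "msg S = (THE A. A \<subseteq> S \<and> gen A = S \<and> (\<forall>B. B \<subset> A \<longrightarrow> gen B \<noteq> S))"

definition embedding_dimension :: "nat set \<Rightarrow> nat" where
  "embedding_dimension S = card (msg S)"

definition multiplicity :: "nat set \<Rightarrow> nat" where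
  "multiplicity S = (LEAST x. x \<in> S \<and> x \<noteq> 0)"

definition apery_w :: "nat set \<Rightarrow> nat \<Rightarrow> nat \<Rightarrow> nat" where
  "apery_w S n i = (LEAST s. s \<in> S \<and> s mod n = i mod n)"

definition MANS :: "nat set \<Rightarrow> bool" where
  "MANS S \<longleftrightarrow> (\<forall>i j. 1 \<le> i \<and> i < j \<and> j \<le> multiplicity S - 1 \<longrightarrow>
      apery_w S (multiplicity S) i < apery_w S (multiplicity S) j)"

end

theory Submission
  imports Defs
begin


definition irr :: "nat set \<Rightarrow> nat set" where
  "irr S = {x\<in>S. x \<noteq> 0 \<and> (\<forall>a\<in>S. \<forall>b\<in>S. x = a + b \<longrightarrow> a = 0 \<or> b = 0)}"

lemma gen_base: "a \<in> A \<Longrightarrow> a \<in> gen A"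
  using gen_add[of a A 0] gen_zero by simp

lemma gen_add_closed: "x \<in> gen A \<Longrightarrow> y \<in> gen A \<Longrightarrow> x + y \<in> gen A"
  by (induction x rule: gen.induct) (auto simp: add.assoc intro: gen_add)

lemma gen_sub: assumes "A \<subseteq> S" "0 \<in> S" "\<forall>x\<in>S. \<forall>y\<in>S. x + y \<in> S" shows "gen A \<subseteq> S"
proof
  fix x assume "x \<in> gen A"
  then show "x \<in> S" using assms by (induction x rule: gen.induct) auto
qed

lemma gen_dec: "x \<in> gen A \<Longrightarrow> x \<noteq> 0 \<Longrightarrow> \<exists>a\<in>A. a \<noteq> 0 \<and> a \<le> x \<and> x - a \<in> gen A"
proof (induction x rule: gen.induct)
  case gen_zero then show ?case by simp
next
  case (gen_add a x)
  show ?case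
  proof (cases "a = 0")
    case True then show ?thesis using gen_add by auto
  next
    case False then show ?thesis using gen_add by auto
  qed
qed

lemma irr_gen:
  assumes "0 \<in> S" "\<forall>x\<in>S. \<forall>y\<in>S. x + y \<in> S"
  shows "gen (irr S) = S"
proof
  show "gen (irr S) \<subseteq> S" using assms by (intro gen_sub) (auto simp: irr_def)
next
  have "x \<in> S \<longrightarrow> x \<in> gen (irr S)" for x
  proof (induction x rule: less_induct)
    case (less x)
    show ?case
    proof
      assume xs: "x \<in> S"
      show "x \<in> gen (irr S)"
      proof (cases "x \<in> irr S \<or> x = 0")
        case True then show ?thesis using gen_base gen_zero by auto
      next
        case False
        then obtain a b where "a \<in> S" "b \<in> S" "x = a + b" "a \<noteq> 0" "b \<noteq> 0"
          using xs unfolding irr_def by auto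
        then show ?thesis using less gen_add_closed by auto
      qed
    qed
  qed
  then show "S \<subseteq> gen (irr S)" by auto
qed

lemma irr_sub:
  assumes "gen A = S"
  shows "irr S \<subseteq> A"
proof
  fix x assume x: "x \<in> irr S"
  then have "x \<in> gen A" "x \<noteq> 0" using assms by (auto simp: irr_def)
  then obtain a where a: "a \<in> A" "a \<noteq> 0" "a \<le> x" "x - a \<in> gen A" using gen_dec by blast
  have "a \<in> S" using a gen_base assms by auto
  moreover have "x - a \<in> S" using a assms by auto
  moreover have xeq: "x = a + (x - a)" using a by simp
  moreover have xi: "\<forall>p\<in>S. \<forall>q\<in>S. x = p + q \<longrightarrow> p = 0 \<or> q = 0" using x by (simp add: irr_def)
  have "a = 0 \<or> x - a = 0" by (rule xi[rule_format, OF \<open>a \<in> S\<close> \<open>x - a \<in> S\<close> xeq])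
  then have "x - a = 0" using a by simp
  then show "x \<in> A" using a by simp
qed

lemma msg_eq:
  assumes "0 \<in> S" "\<forall>x\<in>S. \<forall>y\<in>S. x + y \<in> S"
  shows "msg S = irr S"
  unfolding msg_def
proof (rule the_equality)
  show "irr S \<subseteq> S \<and> gen (irr S) = S \<and> (\<forall>B. B \<subset> irr S \<longrightarrow> gen B \<noteq> S)"
    using irr_gen[OF assms] irr_sub unfolding irr_def by blast
next
  fix A assume A: "A \<subseteq> S \<and> gen A = S \<and> (\<forall>B. B \<subset> A \<longrightarrow> gen B \<noteq> S)"
  then have "irr S \<subseteq> A" using irr_sub by blast
  then show "A = irr S" using A irr_gen[OF assms] by blast
qed

lemma gen_mult: "x \<in> gen A \<Longrightarrow> k * x \<in> gen A"
  by (induction k) (auto intro: gen_zero gen_add_closed)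

lemma gen3: "gen {p, q, r} = {x * p + y * q + z * r | x y z. True}"
proof
  show "gen {p, q, r} \<subseteq> {x * p + y * q + z * r | x y z. True}"
  proof
    fix s assume "s \<in> gen {p, q, r}"
    then show "s \<in> {x * p + y * q + z * r | x y z. True}"
    proof (induction s rule: gen.induct)
      case gen_zero then show ?case by (auto intro: exI[of _ 0])
    next
      case (gen_add a s)
      then obtain x y z where s: "s = x * p + y * q + z * r" by auto
      from gen_add(1) consider "a = p" | "a = q" | "a = r" by auto
      then show ?case
      proof cases
        case 1 then have "a + s = Suc x * p + y * q + z * r" using s by simp
        then show ?thesis by blast
      next
        case 2 then have "a + s = x * p + Suc y * q + z * r" using s by simp
        then show ?thesis by blast
      next
        case 3 then have "a + s = x * p + y * q + Suc z * r" using s by simp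
        then show ?thesis by blast
      qed
    qed
  qed
next
  show "{x * p + y * q + z * r | x y z. True} \<subseteq> gen {p, q, r}"
  proof
    fix s assume "s \<in> {x * p + y * q + z * r | x y z. True}"
    then obtain x y z where s: "s = x * p + y * q + z * r" by auto
    have "p \<in> gen {p,q,r}" "q \<in> gen {p,q,r}" "r \<in> gen {p,q,r}" by (auto intro: gen_base)
    then show "s \<in> gen {p, q, r}" unfolding s by (intro gen_add_closed gen_mult)
  qed
qed



lemma cost_bound:
  fixes m u v t i y z :: nat
  assumes t2: "2 \<le> t" and tm: "t \<le> m" and im: "i < m"
    and v1: "(t - 1) * u < v" and v2: "v < t * u"
    and N: "(y + z * t) mod m = i"
  shows "(i div t) * v + (i mod t) * u \<le> y * u + z * v"
proof -
  define q where "q = i div t"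
  define r where "r = i mod t"
  have i: "i = q * t + r" unfolding q_def r_def by simp
  have rt: "r < t" unfolding r_def using t2 by simp
  define Nn where "Nn = y + z * t"
  have Nn: "Nn = m * (Nn div m) + i" using N div_mult_mod_eq[of Nn m] unfolding Nn_def by (simp add: mult.commute)
  show ?thesis
  proof (cases "Nn div m = 0")
    case True
    then have Ni: "y + z * t = i" using Nn unfolding Nn_def by simp
    then have "z * t < Suc q * t" using i rt by simp
    then have zq: "z \<le> q" using mult_less_cancel2[of z t "Suc q"] by simp
    define d where "d = q - z"
    have qd: "q = z + d" using zq unfolding d_def by simp
    have y: "y = d * t + r" using Ni i qd by (simp add: algebra_simps)
    have "d * v \<le> d * (t * u)" using v2 by simp
    then have "q * v + r * u \<le> y * u + z * v" unfolding y qd by (simp add: algebra_simps)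
    then show ?thesis unfolding q_def r_def .
  next
    case False
    then have "m \<le> m * (Nn div m)" by simp
    then have "Nn \<ge> m + i" using Nn by linarith
    then have NN: "y + z * t \<ge> q * t + r + m" unfolding Nn_def i by simp
    have A: "t * (y * u + z * v) \<ge> (y + z * t) * v"
    proof -
      have "y * v \<le> y * (t * u)" using v2 by simp
      then show ?thesis by (simp add: algebra_simps)
    qed
    have B: "(y + z * t) * v \<ge> (q * t + r + m) * v" using NN by simp
    obtain t' where t': "t = Suc t'" using t2 by (cases t) auto
    have t'1: "t' \<ge> 1" using t2 t' by simp
    have "m \<le> m * t'" using t'1 by simp
    then have "r \<le> m * t'" using rt tm by linarith
    then have C0: "r * t \<le> (r + m) * t'" unfolding t' by (simp add: algebra_simps)
    have "(r + m) * ((t - 1) * u) \<le> (r + m) * v" using v1 by simp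
    moreover have C1: "r * t * u \<le> (r + m) * t' * u" using C0 by (rule mult_le_mono1)
    moreover have "(r + m) * t' * u = (r + m) * ((t - 1) * u)" using t' by (simp add: mult.assoc)
    ultimately have C: "r * t * u \<le> (r + m) * v" by linarith
    have "t * (q * v + r * u) = q * t * v + r * t * u" by (simp add: algebra_simps)
    also have "\<dots> \<le> q * t * v + (r + m) * v" using C by simp
    also have "\<dots> = (q * t + r + m) * v" by (simp add: algebra_simps)
    finally have "t * (q * v + r * u) \<le> t * (y * u + z * v)" using A B by linarith
    then show ?thesis unfolding q_def r_def using t2 by simp
  qed
qed



lemma dir2:
  fixes S :: "nat set" and m a b t :: nat
  assumes S: "S = gen {m, a * m + 1, b * m + t}" and m3: "m \<ge> 3" and a1: "a \<ge> 1"
    and t2: "2 \<le> t" and tm: "t \<le> m - 1"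
    and v1: "(t - 1) * (a * m + 1) < b * m + t" and v2: "b * m + t < t * (a * m + 1)"
  shows "MANS S \<and> embedding_dimension S = 3"
proof -
  define u where "u = a * m + 1"
  define v where "v = b * m + t"
  have v1': "(t - 1) * u < v" and v2': "v < t * u" using v1 v2 unfolding u_def v_def by auto
  have mem: "s \<in> S \<longleftrightarrow> (\<exists>x y z. s = x * m + y * u + z * v)" for s
    unfolding S gen3 u_def v_def by auto
  have zS: "0 \<in> S" unfolding S by (rule gen_zero)
  have cl: "\<forall>x\<in>S. \<forall>y\<in>S. x + y \<in> S" unfolding S using gen_add_closed by blast
  have "1 * m \<le> a * m" using a1 by (rule mult_le_mono1)
  then have mu: "m < u" unfolding u_def by linarith
  have "1 \<le> t - 1" using t2 by simp
  then have "1 * u \<le> (t - 1) * u" by (rule mult_le_mono1)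
  then have uv: "u < v" using v1' by linarith
  have umod: "u mod m = 1" unfolding u_def using m3 by (simp add: mod_Suc)
  have vmod: "v mod m = t" unfolding v_def using m3 tm by simp
  have geq: "s \<in> S \<Longrightarrow> s \<noteq> 0 \<Longrightarrow> m \<le> s" for s
  proof -
    assume "s \<in> S" "s \<noteq> 0"
    then obtain x y z where s: "s = x * m + y * u + z * v" using mem by auto
    consider "x \<noteq> 0" | "y \<noteq> 0" | "z \<noteq> 0" using \<open>s \<noteq> 0\<close> s by fastforce
    then show "m \<le> s"
    proof cases
      case 1 then have "m \<le> x * m" by simp
      then show ?thesis unfolding s by linarith
    next
      case 2 then have "u \<le> y * u" by simp
      then show ?thesis unfolding s using mu by linarith
    next
      case 3 then have "v \<le> z * v" by simp
      then show ?thesis unfolding s using mu uv by linarith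
    qed
  qed
  have mS: "m \<in> S" unfolding mem by (rule exI[of _ 1], rule exI[of _ 0], rule exI[of _ 0]) simp
  have uS: "u \<in> S" unfolding mem by (rule exI[of _ 0], rule exI[of _ 1], rule exI[of _ 0]) simp
  have vS: "v \<in> S" unfolding mem by (rule exI[of _ 0], rule exI[of _ 0], rule exI[of _ 1]) simp
  have mult: "multiplicity S = m"
    unfolding multiplicity_def
    by (rule Least_equality) (use mS m3 geq in auto)
  have low: "s \<in> S \<Longrightarrow> s < v \<Longrightarrow> \<exists>x y. s = x * m + y * u" for s
  proof -
    assume "s \<in> S" "s < v"
    then obtain x y z where s: "s = x * m + y * u + z * v" using mem by auto
    have "z = 0" proof (rule ccontr)
      assume "z \<noteq> 0" then have "v \<le> z * v" by simp
      then show False using \<open>s < v\<close> s by linarith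
    qed
    then show ?thesis using s by auto
  qed
  have irrS: "irr S = {m, u, v}"
  proof
    show "irr S \<subseteq> {m, u, v}" using irr_sub[of "{m,u,v}" S] S unfolding u_def v_def by auto
  next
    have "p = 0 \<or> q = 0" if H: "p \<in> S" "q \<in> S" "m = p + q" for p q
    proof (rule ccontr)
      assume "\<not> (p = 0 \<or> q = 0)"
      then have "m \<le> p" "m \<le> q" using geq[OF H(1)] geq[OF H(2)] by auto
      then show False using H m3 by linarith
    qed
    then have "m \<in> irr S"
      unfolding irr_def using mS m3 by auto
    moreover have "u \<in> irr S"
    proof -
      have "p = 0 \<or> q = 0" if H: "p \<in> S" "q \<in> S" "u = p + q" for p q
      proof (rule ccontr)
        assume "\<not> (p = 0 \<or> q = 0)"
        then have "p < u" "q < u" using H by auto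
        then obtain x1 y1 x2 y2 where p: "p = x1 * m + y1 * u" and q: "q = x2 * m + y2 * u"
          using low H uv by (meson less_trans)
        have "y1 = 0" proof (rule ccontr)
          assume "y1 \<noteq> 0" then have "u \<le> y1 * u" by simp
          then show False using \<open>p < u\<close> p by linarith qed
        moreover have "y2 = 0" proof (rule ccontr)
          assume "y2 \<noteq> 0" then have "u \<le> y2 * u" by simp
          then show False using \<open>q < u\<close> q by linarith qed
        ultimately have "p + q = (x1 + x2) * m" using p q by (simp add: algebra_simps)
        then have "u = (x1 + x2) * m" using H(3) by simp
        then have "u mod m = 0" by simp
        then show False using umod by simp
      qed
      then show ?thesis unfolding irr_def using uS mu by auto
    qed
    moreover have "v \<in> irr S"
    proof -
      have "p = 0 \<or> q = 0" if H: "p \<in> S" "q \<in> S" "v = p + q" for p q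
      proof (rule ccontr)
        assume "\<not> (p = 0 \<or> q = 0)"
        then have "p < v" "q < v" using H by auto
        then obtain x1 y1 x2 y2 where p: "p = x1 * m + y1 * u" and q: "q = x2 * m + y2 * u"
          using low H by meson
        have "p + q = (x1 + x2 + a * (y1 + y2)) * m + (y1 + y2)"
          using p q unfolding u_def by (simp add: algebra_simps)
        then have "v mod m = (y1 + y2) mod m" using H(3) by simp
        then have "(y1 + y2) mod m = t" using vmod by simp
        then have "t \<le> y1 + y2" using mod_less_eq_dividend[of "y1 + y2" m] by simp
        then have "t * u \<le> (y1 + y2) * u" by simp
        moreover have "(y1 + y2) * u \<le> p + q" using p q by (simp add: algebra_simps)
        ultimately show False using v2' H(3) by linarith
      qed
      then show ?thesis unfolding irr_def using vS uv mu by auto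
    qed
    ultimately show "{m, u, v} \<subseteq> irr S" by auto
  qed
  have ed: "embedding_dimension S = 3"
    unfolding embedding_dimension_def msg_eq[OF zS cl] irrS using mu uv by auto
  define f where "f i = (i div t) * v + (i mod t) * u" for i
  have ap: "apery_w S m i = f i" if "i < m" for i
    unfolding apery_w_def
  proof (rule Least_equality)
    have "f i = (b * (i div t) + a * (i mod t)) * m + i"
    proof -
      have "f i = (b * (i div t) + a * (i mod t)) * m + ((i div t) * t + i mod t)"
        unfolding f_def u_def v_def by (simp add: algebra_simps)
      then show ?thesis by simp
    qed
    then have "f i mod m = i mod m" by simp
    moreover have "f i \<in> S" unfolding mem f_def by (rule exI[of _ 0], rule exI[of _ "i mod t"], rule exI[of _ "i div t"]) simp
    ultimately show "f i \<in> S \<and> f i mod m = i mod m" by simp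
  next
    fix s assume s: "s \<in> S \<and> s mod m = i mod m"
    then obtain x y z where sx: "s = x * m + y * u + z * v" using mem by auto
    have "s = (x + a * y + b * z) * m + (y + z * t)" unfolding sx u_def v_def by (simp add: algebra_simps)
    then have "(y + z * t) mod m = i" using s that by simp
    then have "f i \<le> y * u + z * v" unfolding f_def
      using cost_bound[OF t2 _ that v1' v2'] tm by auto
    then show "f i \<le> s" unfolding sx by linarith
  qed
  have fs: "f i < f (Suc i)" for i
  proof (cases "Suc (i mod t) = t")
    case True
    then have "f (Suc i) = Suc (i div t) * v" unfolding f_def by (simp add: div_Suc mod_Suc)
    moreover have "i mod t = t - 1" using True by linarith
    then have "f i = (i div t) * v + (t - 1) * u" unfolding f_def by simp
    ultimately show ?thesis using v1' by simp
  next
    case False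
    then have "f (Suc i) = (i div t) * v + Suc (i mod t) * u" unfolding f_def by (simp add: div_Suc mod_Suc)
    then show ?thesis unfolding f_def using mu by simp
  qed
  have "MANS S"
    unfolding MANS_def mult
  proof (intro allI impI)
    fix i j assume "1 \<le> i \<and> i < j \<and> j \<le> m - 1"
    then show "apery_w S m i < apery_w S m j" using ap lift_Suc_mono_less[of f, OF fs] m3 by auto
  qed
  then show ?thesis using ed by simp
qed



lemma dir1:
  fixes S :: "nat set"
  assumes ns: "numerical_semigroup S" and mans: "MANS S" and ed: "embedding_dimension S = 3"
  shows "\<exists>m a b t :: nat. S = gen {m, a * m + 1, b * m + t} \<and> m \<ge> 3 \<and> a \<ge> 1 \<and>
       2 \<le> t \<and> t \<le> m - 1 \<and>
       (t - 1) * (a * m + 1) < b * m + t \<and> b * m + t < t * (a * m + 1)"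
proof -
  have zS: "0 \<in> S" and cl: "\<forall>x\<in>S. \<forall>y\<in>S. x + y \<in> S" and fin: "finite (UNIV - S)"
    using ns unfolding numerical_semigroup_def by auto
  obtain N where N: "\<forall>n\<in>UNIV - S. n < N" using fin finite_nat_set_iff_bounded by blast
  have bigS: "n \<ge> N \<Longrightarrow> n \<in> S" for n using N by (meson DiffI UNIV_I not_less)
  define m where "m = multiplicity S"
  have ex: "Suc N \<in> S \<and> Suc N \<noteq> 0" using bigS by simp
  have mS: "m \<in> S" and m0: "m \<noteq> 0"
    using LeastI[of "\<lambda>x. x \<in> S \<and> x \<noteq> 0", OF ex] unfolding m_def multiplicity_def by auto
  have mle: "s \<in> S \<Longrightarrow> s \<noteq> 0 \<Longrightarrow> m \<le> s" for s
    unfolding m_def multiplicity_def by (rule Least_le) simp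
  have multS: "k * s \<in> S" if "s \<in> S" for k s
    by (induction k) (use zS cl that in auto)
  have card3: "card (irr S) = 3" using ed unfolding embedding_dimension_def msg_eq[OF zS cl] .
  have irrS_sub: "irr S \<subseteq> S" unfolding irr_def by auto
  have irr0: "x \<in> irr S \<Longrightarrow> x \<noteq> 0" for x unfolding irr_def by auto
  have irrD: "x \<in> irr S \<Longrightarrow> p \<in> S \<Longrightarrow> q \<in> S \<Longrightarrow> x = p + q \<Longrightarrow> p = 0 \<or> q = 0" for x p q
    unfolding irr_def by auto
  have m_irr: "m \<in> irr S"
  proof -
    have "p = 0 \<or> q = 0" if H: "p \<in> S" "q \<in> S" "m = p + q" for p q
    proof (rule ccontr)
      assume "\<not> (p = 0 \<or> q = 0)"
      then have "m \<le> p" "m \<le> q" using mle[OF H(1)] mle[OF H(2)] by auto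
      then show False using H m0 by linarith
    qed
    then show ?thesis unfolding irr_def using mS m0 by auto
  qed
  have "card (irr S - {m}) = 2" using card3 m_irr by (simp add: card_Diff_singleton)
  then obtain x y where xy: "irr S - {m} = {x, y}" "x \<noteq> y" by (auto simp: card_2_iff)
  obtain n1 n2 where irrS: "irr S = {m, n1, n2}" and n12: "n1 < n2" and n1m: "n1 \<noteq> m" and n2m: "n2 \<noteq> m"
  proof (cases "x < y")
    case True
    then show ?thesis using that[of x y] xy m_irr by blast
  next
    case False
    then have "y < x" using xy by simp
    then show ?thesis using that[of y x] xy m_irr by blast
  qed
  have n1S: "n1 \<in> irr S" and n2S: "n2 \<in> irr S" using irrS by auto
  have apI: "\<forall>s\<in>S. n \<noteq> s + m" if "n \<in> irr S" "n \<noteq> m" for n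
  proof
    fix s assume "s \<in> S"
    show "n \<noteq> s + m"
    proof
      assume "n = s + m"
      then have "s \<noteq> 0" using that by auto
      then show False using irrD[OF that(1) \<open>s \<in> S\<close> mS \<open>n = s + m\<close>] m0 by auto
    qed
  qed
  define w where "w i = apery_w S m i" for i
  have wP: "w i \<in> S \<and> w i mod m = i mod m" for i
  proof -
    have "N * m + i mod m \<in> S \<and> (N * m + i mod m) mod m = i mod m"
      using bigS m0 by (simp add: trans_le_add1)
    then show ?thesis unfolding w_def apery_w_def by (rule LeastI)
  qed
  have wle: "s \<in> S \<Longrightarrow> s mod m = i mod m \<Longrightarrow> w i \<le> s" for s i
    unfolding w_def apery_w_def by (rule Least_le) simp
  have apw: "n = w (n mod m)" if "n \<in> S" "\<forall>s\<in>S. n \<noteq> s + m" for n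
  proof -
    have le: "w (n mod m) \<le> n" using wle[OF that(1)] by simp
    have "n mod m = w (n mod m) mod m" using wP by simp
    then have "m dvd n - w (n mod m)" using mod_eq_dvd_iff_nat[OF le, of m] by blast
    then obtain k where k: "n - w (n mod m) = m * k" by blast
    show ?thesis
    proof (rule ccontr)
      assume "n \<noteq> w (n mod m)"
      have "k \<noteq> 0" proof assume "k = 0" then show False using k le \<open>n \<noteq> w (n mod m)\<close> by simp qed
      then obtain k' where k': "k = Suc k'" by (cases k) auto
      have "n = w (n mod m) + m * k" using k le by simp
      then have "n = (w (n mod m) + k' * m) + m" unfolding k' by (simp add: algebra_simps)
      moreover have "w (n mod m) + k' * m \<in> S" using wP multS[OF mS] cl by blast
      ultimately show False using that(2) by blast
    qed
  qed
  have apnz: "n mod m \<noteq> 0" if "n \<in> S" "n \<noteq> 0" "\<forall>s\<in>S. n \<noteq> s + m" for n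
  proof
    assume "n mod m = 0"
    then have "n = (n div m) * m" using div_mult_mod_eq[of n m] by simp
    then have "n div m \<noteq> 0" using that(2) by (cases "n div m") auto
    then obtain k' where k': "n div m = Suc k'" by (cases "n div m") auto
    then have "n = k' * m + m" using \<open>n = (n div m) * m\<close> by simp
    then show False using that(3) multS[OF mS] by blast
  qed
  have n1ap: "\<forall>s\<in>S. n1 \<noteq> s + m" and n2ap: "\<forall>s\<in>S. n2 \<noteq> s + m" using apI n1S n2S n1m n2m by auto
  have n1inS: "n1 \<in> S" and n2inS: "n2 \<in> S" using n1S n2S irrS_sub by auto
  define r1 where "r1 = n1 mod m"
  define t where "t = n2 mod m"
  have r1nz: "r1 \<noteq> 0" unfolding r1_def using apnz n1inS n1ap irr0 n1S by blast
  have tnz: "t \<noteq> 0" unfolding t_def using apnz n2inS n2ap irr0 n2S by blast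
  have "m \<noteq> 1" using r1nz unfolding r1_def by auto
  then have m2: "m \<ge> 2" using m0 by linarith
  have r1m: "r1 < m" and tm: "t < m" unfolding r1_def t_def using m0 by auto
  have n1w: "n1 = w r1" unfolding r1_def using apw n1inS n1ap by blast
  have n2w: "n2 = w t" unfolding t_def using apw n2inS n2ap by blast
  have wmod: "w i mod m = i" if "i < m" for i using wP[of i] that by simp
  have r1t: "r1 \<noteq> t" using n1w n2w n12 by auto
  have mans': "1 \<le> i \<Longrightarrow> i < j \<Longrightarrow> j \<le> m - 1 \<Longrightarrow> w i < w j" for i j
    using mans unfolding MANS_def w_def m_def by blast
  have w1mod: "w 1 mod m = 1" using wmod m2 by simp
  have w1S: "w 1 \<in> S" using wP by blast
  have w1irr: "w 1 \<in> irr S"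
  proof -
    have "p = 0 \<or> q = 0" if H: "p \<in> S" "q \<in> S" "w 1 = p + q" for p q
    proof (rule ccontr)
      assume pq: "\<not> (p = 0 \<or> q = 0)"
      then have plt: "p < w 1" using H by simp
      have pap: "\<forall>s\<in>S. p \<noteq> s + m"
      proof (intro ballI notI)
        fix s assume s: "s \<in> S" "p = s + m"
        then have "s + q \<in> S" using cl H by blast
        moreover have "(s + q) mod m = 1"
        proof -
          have "(s + q + m) mod m = 1" using H s w1mod by (simp add: add.commute add.left_commute)
          then show ?thesis by simp
        qed
        ultimately have "w 1 \<le> s + q" using wle[of "s + q" 1] m2 by simp
        then show False using H s m0 by linarith
      qed
      have pw: "p = w (p mod m)" using apw H(1) pap by blast
      have pnz: "p mod m \<noteq> 0" using apnz H(1) pq pap by blast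
      show False
      proof (cases "p mod m = 1")
        case True then show ?thesis using pw plt by simp
      next
        case False
        have "p mod m < m" using m0 by simp
        then have "w 1 < w (p mod m)" using pnz False by (intro mans') linarith+
        then show ?thesis using pw plt by simp
      qed
    qed
    moreover have "w 1 \<noteq> 0" proof assume "w 1 = 0" then show False using w1mod by simp qed
    ultimately show ?thesis unfolding irr_def using w1S by auto
  qed
  have r1_1: "r1 = 1"
  proof -
    have "w 1 \<noteq> m" using w1mod by auto
    then have "w 1 = n1 \<or> w 1 = n2" using w1irr irrS by auto
    then show ?thesis
    proof
      assume "w 1 = n1" then show ?thesis using w1mod unfolding r1_def by simp
    next
      assume A: "w 1 = n2"
      then have "t = 1" using w1mod unfolding t_def by simp
      then have "r1 \<ge> 2" using r1t r1nz by linarith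
      then have "w 1 < w r1" using mans' r1m by simp
      then show ?thesis using A n1w n12 by simp
    qed
  qed
  define a where "a = n1 div m"
  define b where "b = n2 div m"
  have n1e: "n1 = a * m + 1" unfolding a_def using r1_1 unfolding r1_def using div_mult_mod_eq[of n1 m] by simp
  have n2e: "n2 = b * m + t" unfolding b_def t_def using div_mult_mod_eq[of n2 m] by simp
  have t2: "t \<ge> 2" using tnz r1t r1_1 by linarith
  have m3: "m \<ge> 3" using t2 tm by linarith
  have a1: "a \<ge> 1"
  proof (rule ccontr)
    assume "\<not> a \<ge> 1" then have "n1 = 1" using n1e by simp
    then show False using mle[OF n1inS] m2 by simp
  qed
  have tn1S: "t * n1 \<in> S" using multS n1inS by blast
  have tn1mod: "(t * n1) mod m = t mod m"
  proof -
    have "t * n1 = (t * a) * m + t" unfolding n1e by (simp add: algebra_simps)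
    then show ?thesis by simp
  qed
  have "n2 \<le> t * n1" using n2w wle[OF tn1S tn1mod] by simp
  moreover have "n2 \<noteq> t * n1"
  proof
    assume "n2 = t * n1"
    moreover obtain t' where "t = Suc t'" using t2 by (cases t) auto
    ultimately have e: "n2 = n1 + (t - 1) * n1" by simp
    have tS: "(t - 1) * n1 \<in> S" using multS n1inS by blast
    have "(t - 1) * n1 \<noteq> 0" using t2 n1e by simp
    moreover have "n1 = 0 \<or> (t - 1) * n1 = 0" by (rule irrD[OF n2S n1inS tS e])
    ultimately show False using irr0[OF n1S] by simp
  qed
  ultimately have up: "n2 < t * n1" by simp
  have Sg: "S = gen {m, n1, n2}" using irr_gen[OF zS cl] irrS by simp
  have wlt: "w (t - 1) < n2" using mans'[of "t - 1" t] t2 tm n2w by simp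
  have "w (t - 1) \<in> S" using wP by blast
  then obtain x y z where wx: "w (t - 1) = x * m + y * n1 + z * n2" unfolding Sg gen3 by blast
  have z0: "z = 0"
  proof (rule ccontr)
    assume "z \<noteq> 0" then have "n2 \<le> z * n2" by simp
    then show False using wx wlt by linarith
  qed
  have "w (t - 1) = (x + y * a) * m + y" using wx z0 n1e by (simp add: algebra_simps)
  then have "y mod m = w (t - 1) mod m" by simp
  then have "y mod m = t - 1" using wmod[of "t - 1"] tm by simp
  then have "t - 1 \<le> y" using mod_less_eq_dividend[of y m] by simp
  then have "(t - 1) * n1 \<le> y * n1" by simp
  then have low: "(t - 1) * n1 < n2" using wx wlt by linarith
  show ?thesis
    apply (rule exI[of _ m], rule exI[of _ a], rule exI[of _ b], rule exI[of _ t])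
    using Sg n1e n2e m3 a1 t2 tm low up by simp
qed


theorem theorem3p7:
  fixes S :: "nat set"
  assumes "numerical_semigroup S"
  shows "(MANS S \<and> embedding_dimension S = 3) \<longleftrightarrow>
    (\<exists>m a b t :: nat. S = gen {m, a * m + 1, b * m + t} \<and> m \<ge> 3 \<and> a \<ge> 1 \<and>
       2 \<le> t \<and> t \<le> m - 1 \<and>
       (t - 1) * (a * m + 1) < b * m + t \<and> b * m + t < t * (a * m + 1))"
proof
  assume "MANS S \<and> embedding_dimension S = 3"
  then show "\<exists>m a b t :: nat. S = gen {m, a * m + 1, b * m + t} \<and> m \<ge> 3 \<and> a \<ge> 1 \<and>
       2 \<le> t \<and> t \<le> m - 1 \<and>
       (t - 1) * (a * m + 1) < b * m + t \<and> b * m + t < t * (a * m + 1)"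
    using dir1[OF assms] by blast
next
  assume "\<exists>m a b t :: nat. S = gen {m, a * m + 1, b * m + t} \<and> m \<ge> 3 \<and> a \<ge> 1 \<and>
       2 \<le> t \<and> t \<le> m - 1 \<and>
       (t - 1) * (a * m + 1) < b * m + t \<and> b * m + t < t * (a * m + 1)"
  then obtain m a b t :: nat where H: "S = gen {m, a * m + 1, b * m + t}" "m \<ge> 3" "a \<ge> 1"
       "2 \<le> t" "t \<le> m - 1"
       "(t - 1) * (a * m + 1) < b * m + t" "b * m + t < t * (a * m + 1)" by blast
  show "MANS S \<and> embedding_dimension S = 3" by (rule dir2[OF H])
qed

end
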